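(* For every integer $v\ge 2$, the $(v,2,1)$-BIBD on a $v$-set $X$ (whose blocks are all $2$-subsets of $X$) has a weak nesting $\phi:\mathcal{A}\to Y$ with $X\subseteq Y$ and $|Y|=w=\left\lceil \frac{5v-1}{4}\right\rceil$, and this is optimal, i.e. no weak nesting of this BIBD has $|Y|<\left\lceil \frac{5v-1}{4}\right\rceil$.
   Context: A $(v,k,\lambda)$-BIBD is a pair $(X,\mathcal{A})$ where $X$ is a set of $v$ points and $\mathcal{A}$ is a multiset of $k$-subsets of $X$ (blocks) such that every pair of distinct points lies in exactly $\lambda$ blocks. A partial $(w,k,\lambda)$-BIBD is defined in the same way on $w$ points, except that every pair lies in at most $\lambda$ blocks. Given a $(v,k,\lambda)$-BIBD $(X,\mathcal{A})$ and a set $Y\supseteq X$ with $|Y|=w$, a map $\phi:\mathcal{A}\to Y$ is a weak nesting if $\phi(A)\notin A$ for every block $A$ and the multiset $\{A\cup\{\phi(A)\}:A\in\mathcal{A}\}$ is a partial $(w,k+1,\lambda+1)$-BIBD on $Y$. A weak nesting is optimal if $w=|Y|$ is as small as possible. *)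

theory Defs
  imports Complex_Main "HOL-Library.Multiset"
begin

definition partial_bibd :: "'a set \<Rightarrow> nat \<Rightarrow> nat \<Rightarrow> 'a set multiset \<Rightarrow> bool" where
  "partial_bibd Y k lam B \<longleftrightarrow> finite Y \<and> (\<forall>A \<in># B. A \<subseteq> Y \<and> card A = k) \<and>
     (\<forall>x\<in>Y. \<forall>y\<in>Y. x \<noteq> y \<longrightarrow> size (filter_mset (\<lambda>A. x \<in> A \<and> y \<in> A) B) \<le> lam)"

definition bibd :: "'a set \<Rightarrow> nat \<Rightarrow> nat \<Rightarrow> 'a set multiset \<Rightarrow> bool" where
  "bibd X k lam B \<longleftrightarrow> finite X \<and> (\<forall>A \<in># B. A \<subseteq> X \<and> card A = k) \<and>
     (\<forall>x\<in>X. \<forall>y\<in>X. x \<noteq> y \<longrightarrow> size (filter_mset (\<lambda>A. x \<in> A \<and> y \<in> A) B) = lam)"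

definition pairs :: "'a set \<Rightarrow> 'a set set" where
  "pairs X = {A. A \<subseteq> X \<and> card A = 2}"

definition weak_nesting ::
  "'a set \<Rightarrow> nat \<Rightarrow> nat \<Rightarrow> 'a set set \<Rightarrow> 'a set \<Rightarrow> ('a set \<Rightarrow> 'a) \<Rightarrow> bool" where
  "weak_nesting X k lam \<A> Y \<phi> \<longleftrightarrow> X \<subseteq> Y \<and> (\<forall>A\<in>\<A>. \<phi> A \<in> Y \<and> \<phi> A \<notin> A) \<and>
     partial_bibd Y (k + 1) (lam + 1) (image_mset (\<lambda>A. insert (\<phi> A) A) (mset_set \<A>))"

end

theory Submission
  imports Defs "HOL-Library.Nat_Bijection"
begin



definition WN :: "'a set \<Rightarrow> 'a set \<Rightarrow> ('a set \<Rightarrow> 'a) \<Rightarrow> bool" where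
  "WN X Y \<phi> \<longleftrightarrow> finite Y \<and> X \<subseteq> Y \<and> (\<forall>A\<in>pairs X. \<phi> A \<in> Y \<and> \<phi> A \<notin> A) \<and>
     (\<forall>x\<in>Y. \<forall>y\<in>Y. x \<noteq> y \<longrightarrow> card {A\<in>pairs X. x \<in> insert (\<phi> A) A \<and> y \<in> insert (\<phi> A) A} \<le> 2)"

lemma finite_pairs: "finite X \<Longrightarrow> finite (pairs X)"
  unfolding pairs_def by (rule finite_subset[of _ "Pow X"]) auto

lemma size_filter_image:
  assumes "finite S"
  shows "size (filter_mset P (image_mset f (mset_set S))) = card {A\<in>S. P (f A)}"
  using assms by (simp add: filter_mset_image_mset)

lemma WN_iff: "weak_nesting X 2 1 (pairs X) Y \<phi> \<longleftrightarrow> WN X Y \<phi>"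
proof
  assume H: "weak_nesting X 2 1 (pairs X) Y \<phi>"
  then have XY: "X \<subseteq> Y" and ph: "\<forall>A\<in>pairs X. \<phi> A \<in> Y \<and> \<phi> A \<notin> A"
    and pb: "partial_bibd Y 3 2 (image_mset (\<lambda>A. insert (\<phi> A) A) (mset_set (pairs X)))"
  proof -
    have e: "(2::nat)+1 = 3" "(1::nat)+1 = 2" by simp_all
    show "X \<subseteq> Y" "\<forall>A\<in>pairs X. \<phi> A \<in> Y \<and> \<phi> A \<notin> A"
      "partial_bibd Y 3 2 (image_mset (\<lambda>A. insert (\<phi> A) A) (mset_set (pairs X)))"
      using H unfolding weak_nesting_def e by blast+
  qed
  have fY: "finite Y" using pb unfolding partial_bibd_def by auto
  have fP: "finite (pairs X)" using finite_pairs finite_subset[OF XY fY] by blast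
  have "\<forall>x\<in>Y. \<forall>y\<in>Y. x \<noteq> y \<longrightarrow> size (filter_mset (\<lambda>B. x \<in> B \<and> y \<in> B) (image_mset (\<lambda>A. insert (\<phi> A) A) (mset_set (pairs X)))) \<le> 2"
    using pb unfolding partial_bibd_def by simp
  then have "\<forall>x\<in>Y. \<forall>y\<in>Y. x \<noteq> y \<longrightarrow> card {A\<in>pairs X. x \<in> insert (\<phi> A) A \<and> y \<in> insert (\<phi> A) A} \<le> 2"
    by (simp only: size_filter_image[OF fP])
  then show "WN X Y \<phi>" unfolding WN_def using XY ph fY by blast
next
  assume H: "WN X Y \<phi>"
  then have XY: "X \<subseteq> Y" and ph: "\<forall>A\<in>pairs X. \<phi> A \<in> Y \<and> \<phi> A \<notin> A" and fY: "finite Y"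
    and cnt: "\<forall>x\<in>Y. \<forall>y\<in>Y. x \<noteq> y \<longrightarrow> card {A\<in>pairs X. x \<in> insert (\<phi> A) A \<and> y \<in> insert (\<phi> A) A} \<le> 2"
    unfolding WN_def by auto
  have fP: "finite (pairs X)" using finite_pairs finite_subset[OF XY fY] by blast
  have "\<forall>A\<in>pairs X. insert (\<phi> A) A \<subseteq> Y \<and> card (insert (\<phi> A) A) = 3"
  proof
    fix A assume A: "A \<in> pairs X"
    then have "A \<subseteq> X" "card A = 2" unfolding pairs_def by auto
    moreover then have "finite A" by (metis card.infinite zero_neq_numeral)
    ultimately show "insert (\<phi> A) A \<subseteq> Y \<and> card (insert (\<phi> A) A) = 3"
      using ph A XY by auto
  qed
  then have B1: "\<forall>B\<in>#image_mset (\<lambda>A. insert (\<phi> A) A) (mset_set (pairs X)). B \<subseteq> Y \<and> card B = 3"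
    using fP by simp
  have e: "(2::nat)+1 = 3" "(1::nat)+1 = 2" by simp_all
  have B2: "\<forall>x\<in>Y. \<forall>y\<in>Y. x \<noteq> y \<longrightarrow> size (filter_mset (\<lambda>B. x \<in> B \<and> y \<in> B) (image_mset (\<lambda>A. insert (\<phi> A) A) (mset_set (pairs X)))) \<le> 2"
    using cnt by (simp only: size_filter_image[OF fP])
  show "weak_nesting X 2 1 (pairs X) Y \<phi>"
    unfolding weak_nesting_def partial_bibd_def e using XY ph fY B1 B2 by blast
qed

lemma WN_D:
  assumes "WN X Y \<phi>"
  shows "finite Y" "X \<subseteq> Y" "\<And>A. A \<in> pairs X \<Longrightarrow> \<phi> A \<in> Y" "\<And>A. A \<in> pairs X \<Longrightarrow> \<phi> A \<notin> A"
    "\<And>x y. x\<in>Y \<Longrightarrow> y\<in>Y \<Longrightarrow> x \<noteq> y \<Longrightarrow> card {A\<in>pairs X. x \<in> insert (\<phi> A) A \<and> y \<in> insert (\<phi> A) A} \<le> 2"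
  using assms unfolding WN_def by blast+




lemma bibd_pairs: "finite X \<Longrightarrow> bibd X 2 1 (mset_set (pairs X))"
proof -
  assume fX: "finite X"
  have fP: "finite (pairs X)" using finite_pairs[OF fX] .
  have "\<And>x y. x \<in> X \<Longrightarrow> y \<in> X \<Longrightarrow> x \<noteq> y \<Longrightarrow> {A\<in>pairs X. x \<in> A \<and> y \<in> A} = {{x,y}}"
  proof -
    fix x y assume xy: "x \<in> X" "y \<in> X" "x \<noteq> y"
    show "{A\<in>pairs X. x \<in> A \<and> y \<in> A} = {{x,y}}"
    proof (rule set_eqI, rule iffI)
      fix A assume "A \<in> {A\<in>pairs X. x \<in> A \<and> y \<in> A}"
      then obtain a b where "A = {a,b}" "a \<noteq> b" "x \<in> A" "y \<in> A"
        unfolding pairs_def by (auto simp: card_2_iff)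
      then show "A \<in> {{x,y}}" using xy by auto
    next
      fix A assume "A \<in> {{x,y}}"
      then show "A \<in> {A\<in>pairs X. x \<in> A \<and> y \<in> A}" using xy unfolding pairs_def by auto
    qed
  qed
  then show ?thesis unfolding bibd_def using fX fP by (auto simp: pairs_def)
qed

lemma double_count:
  assumes "finite S" "finite T"
  shows "(\<Sum>x\<in>S. card {y\<in>T. R x y}) = (\<Sum>y\<in>T. card {x\<in>S. R x y})"
proof -
  have "(\<Sum>x\<in>S. card {y\<in>T. R x y}) = (\<Sum>x\<in>S. \<Sum>y\<in>T. of_bool (R x y))"
    using assms by (simp add: Int_def conj_commute)
  also have "\<dots> = (\<Sum>y\<in>T. \<Sum>x\<in>S. of_bool (R x y))" by (rule sum.swap)
  also have "\<dots> = (\<Sum>y\<in>T. card {x\<in>S. R x y})"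
    using assms by (simp add: Int_def conj_commute)
  finally show ?thesis .
qed

lemma pair_elim:
  assumes "A \<in> pairs X"
  obtains a b where "A = {a,b}" "a \<noteq> b" "a \<in> X" "b \<in> X"
  using assms unfolding pairs_def by (auto simp: card_2_iff)

lemma card_triple_pairs:
  assumes "A \<in> pairs X" "z \<notin> A"
  shows "card {e\<in>pairs X. e \<subseteq> insert z A} = (if z \<in> X then 3 else 1)"
proof -
  obtain a b where ab: "A = {a,b}" "a \<noteq> b" "a \<in> X" "b \<in> X" using pair_elim[OF assms(1)] .
  have za: "z \<noteq> a" "z \<noteq> b" using assms(2) ab by auto
  show ?thesis
  proof (cases "z \<in> X")
    case True
    have "{e\<in>pairs X. e \<subseteq> insert z A} = {{a,b},{z,a},{z,b}}"
    proof (rule set_eqI, rule iffI)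
      fix e assume "e \<in> {e\<in>pairs X. e \<subseteq> insert z A}"
      then obtain p q where "e = {p,q}" "p \<noteq> q" "e \<subseteq> {z,a,b}"
        using ab unfolding pairs_def by (auto simp: card_2_iff)
      then show "e \<in> {{a,b},{z,a},{z,b}}" by auto
    next
      fix e assume "e \<in> {{a,b},{z,a},{z,b}}"
      then show "e \<in> {e\<in>pairs X. e \<subseteq> insert z A}"
        using ab za True unfolding pairs_def by auto
    qed
    moreover have "card {{a,b},{z,a},{z,b}} = 3"
      using ab za by (auto simp: doubleton_eq_iff)
    ultimately show ?thesis using True by simp
  next
    case False
    have "{e\<in>pairs X. e \<subseteq> insert z A} = {{a,b}}"
    proof (rule set_eqI, rule iffI)
      fix e assume "e \<in> {e\<in>pairs X. e \<subseteq> insert z A}"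
      then obtain p q where "e = {p,q}" "p \<noteq> q" "e \<subseteq> {z,a,b}" "e \<subseteq> X"
        using ab unfolding pairs_def by (auto simp: card_2_iff)
      then show "e \<in> {{a,b}}" using False by auto
    next
      fix e assume "e \<in> {{a,b}}"
      then show "e \<in> {e\<in>pairs X. e \<subseteq> insert z A}"
        using ab unfolding pairs_def by auto
    qed
    then show ?thesis using False by simp
  qed
qed

lemma card_triple_mixed:
  assumes "A \<in> pairs X" "z \<notin> A" "z \<in> Y"
  shows "card {p\<in>X \<times> (Y - X). fst p \<in> insert z A \<and> snd p \<in> insert z A} = (if z \<in> X then 0 else 2)"
proof -
  obtain a b where ab: "A = {a,b}" "a \<noteq> b" "a \<in> X" "b \<in> X" using pair_elim[OF assms(1)] .
  show ?thesis
  proof (cases "z \<in> X")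
    case True
    have e: "{p\<in>X \<times> (Y - X). fst p \<in> insert z A \<and> snd p \<in> insert z A} = {}" using ab True by auto
    show ?thesis unfolding e using True by simp
  next
    case False
    then have "{p\<in>X \<times> (Y - X). fst p \<in> insert z A \<and> snd p \<in> insert z A} = {(a,z),(b,z)}"
      using ab assms by auto
    then show ?thesis using False ab by simp
  qed
qed

lemma lower_bound:
  assumes W: "WN X Y \<phi>" and fX: "finite X"
  shows "card X - 1 \<le> 4 * card (Y - X)"
proof -
  define P where "P = pairs X"
  define T where "T = (\<lambda>A. insert (\<phi> A) A)"
  have XY: "X \<subseteq> Y" and ph: "\<forall>A\<in>P. \<phi> A \<in> Y \<and> \<phi> A \<notin> A" and fY: "finite Y"
    and cnt: "\<And>x y. x\<in>Y \<Longrightarrow> y\<in>Y \<Longrightarrow> x \<noteq> y \<Longrightarrow> card {A\<in>P. x \<in> T A \<and> y \<in> T A} \<le> 2"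
  proof -
    show "X \<subseteq> Y" by (rule WN_D(2)[OF W])
    show "\<forall>A\<in>P. \<phi> A \<in> Y \<and> \<phi> A \<notin> A" unfolding P_def using WN_D(3,4)[OF W] by blast
    show "finite Y" by (rule WN_D(1)[OF W])
    fix x y assume "x\<in>Y" "y\<in>Y" "x \<noteq> y"
    then show "card {A\<in>P. x \<in> T A \<and> y \<in> T A} \<le> 2" unfolding P_def T_def by (rule WN_D(5)[OF W])
  qed
  have fP: "finite P" using finite_pairs[OF fX] P_def by simp
  define PX where "PX = {A\<in>P. \<phi> A \<in> X}"
  define PN where "PN = {A\<in>P. \<phi> A \<notin> X}"
  have cP: "card PX + card PN = card P"
  proof -
    have "card P = card (PX \<union> PN)" unfolding PX_def PN_def by (rule arg_cong[where f=card]) auto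
    also have "\<dots> = card PX + card PN" using fP unfolding PX_def PN_def by (intro card_Un_disjoint) auto
    finally show ?thesis by simp
  qed
  have s1: "(\<Sum>e\<in>P. card {A\<in>P. e \<subseteq> T A}) \<le> (\<Sum>e\<in>P. 2)"
  proof (rule sum_mono)
    fix e assume "e \<in> P"
    then obtain x y where e: "e = {x,y}" "x \<noteq> y" "x \<in> X" "y \<in> X" unfolding P_def by (rule pair_elim)
    then show "card {A\<in>P. e \<subseteq> T A} \<le> 2" using cnt[of x y] XY by auto
  qed
  have s2: "(\<Sum>e\<in>P. card {A\<in>P. e \<subseteq> T A}) = (\<Sum>A\<in>P. card {e\<in>P. e \<subseteq> T A})"
    by (rule double_count[OF fP fP])
  have s3: "(\<Sum>A\<in>P. card {e\<in>P. e \<subseteq> T A}) = (\<Sum>A\<in>P. (if \<phi> A \<in> X then 3 else 1))"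
  proof (rule sum.cong[OF refl])
    fix A assume A: "A \<in> P"
    then show "card {e\<in>P. e \<subseteq> T A} = (if \<phi> A \<in> X then 3 else 1)"
      using card_triple_pairs[of A X "\<phi> A"] ph unfolding T_def P_def by simp
  qed
  have s4: "(\<Sum>A\<in>P. (if \<phi> A \<in> X then 3 else 1::nat)) = 3 * card PX + card PN"
    using fP unfolding PX_def PN_def by (simp add: sum.If_cases Int_def conj_commute)
  have a1: "card PX \<le> card PN" using s1 s2 s3 s4 cP by simp
  let ?Q = "X \<times> (Y - X)"
  have fQ: "finite ?Q" using fX fY by auto
  have t1: "(\<Sum>p\<in>?Q. card {A\<in>P. fst p \<in> T A \<and> snd p \<in> T A}) \<le> (\<Sum>p\<in>?Q. 2)"
  proof (rule sum_mono)
    fix p assume "p \<in> ?Q"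
    then obtain x y where p: "p = (x,y)" "x \<in> X" "y \<in> Y" "y \<notin> X" by auto
    then have "x \<in> Y" "x \<noteq> y" using XY by auto
    then show "card {A\<in>P. fst p \<in> T A \<and> snd p \<in> T A} \<le> 2" using cnt[of x y] p by simp
  qed
  have t2: "(\<Sum>p\<in>?Q. card {A\<in>P. fst p \<in> T A \<and> snd p \<in> T A}) =
      (\<Sum>A\<in>P. card {p\<in>?Q. fst p \<in> T A \<and> snd p \<in> T A})"
    by (rule double_count[OF fQ fP])
  have t3: "(\<Sum>A\<in>P. card {p\<in>?Q. fst p \<in> T A \<and> snd p \<in> T A}) = (\<Sum>A\<in>P. (if \<phi> A \<in> X then 0 else 2))"
  proof (rule sum.cong[OF refl])
    fix A assume A: "A \<in> P"
    then show "card {p\<in>?Q. fst p \<in> T A \<and> snd p \<in> T A} = (if \<phi> A \<in> X then 0 else 2)"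
      using card_triple_mixed[of A X "\<phi> A" Y] ph unfolding T_def P_def by simp
  qed
  have t4: "(\<Sum>A\<in>P. (if \<phi> A \<in> X then 0 else 2::nat)) = 2 * card PN"
    using fP unfolding PN_def by (simp add: sum.If_cases Int_def conj_commute)
  have "card ?Q = card X * card (Y - X)" by (simp add: card_cartesian_product)
  then have a2: "card PN \<le> card X * card (Y - X)" using t1 t2 t3 t4 by simp
  have cPv: "card P = card X * (card X - 1) div 2"
    unfolding P_def pairs_def using n_subsets[OF fX, of 2] by (simp add: choose_two)
  have ev: "even (card X * (card X - 1))" by (cases "even (card X)") auto
  have "2 * card P = card X * (card X - 1)" using cPv ev by simp
  then have "card X * (card X - 1) \<le> 4 * (card X * card (Y - X))"
    using a1 a2 cP by linarith
  then have "card X * (card X - 1) \<le> card X * (4 * card (Y - X))" by simp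
  then show ?thesis
    by (cases "card X = 0") auto
qed




definition fv :: "int \<Rightarrow> int \<Rightarrow> int \<Rightarrow> int \<Rightarrow> int \<Rightarrow> int" where
  "fv u K v x y = (if y = u then (x + u div 2) mod u
    else if odd (y - x) \<and> y - x \<le> 2*K - 1 then (x - (2*K + 1 - (y - x)) div 2) mod u
    else if odd (u - (y - x)) \<and> u - (y - x) \<le> 2*K - 1 then (y - (2*K + 1 - (u - (y - x))) div 2) mod u
    else v + min (y - x) (u - (y - x)))"

definition CC :: "int \<Rightarrow> int \<Rightarrow> int set" where
  "CC u K = (\<lambda>j. 2*j) ` {1..K} \<union> {2*K+1..u div 2}"

lemma CC_mem:
  assumes "1 \<le> c" "c \<le> u div 2" "\<not> (odd c \<and> c \<le> 2*K - 1)"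
  shows "c \<in> CC u K"
proof (cases "c \<ge> 2*K+1")
  case True then show ?thesis using assms unfolding CC_def by auto
next
  case False
  have "even c"
  proof (cases "c \<le> 2*K - 1")
    case True then show ?thesis using assms by auto
  next
    case False then have "c = 2*K" using \<open>\<not> c \<ge> 2*K+1\<close> by auto
    then show ?thesis by simp
  qed
  then obtain j where j: "c = 2*j" by blast
  then have "j \<in> {1..K}" using assms False by auto
  then show ?thesis unfolding CC_def using j by auto
qed

lemma CC_bounds: "c \<in> CC u K \<Longrightarrow> 0 \<le> K \<Longrightarrow> 4*K+1 \<le> u \<Longrightarrow> 1 \<le> c \<and> c \<le> u div 2"
  unfolding CC_def by auto

lemma modA: "(a - b mod (u::int)) mod u = (a - b) mod u"
  by (simp add: mod_diff_right_eq)

lemma modk: "0 \<le> a - k*u \<Longrightarrow> a - k*u < u \<Longrightarrow> a mod (u::int) = a - k*u"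
proof -
  assume h: "0 \<le> a - k*u" "a - k*u < u"
  have "(a - k*u + k*u) mod u = (a - k*u) mod u" by (rule mod_mult_self1)
  then have "a mod u = (a - k*u) mod u" by simp
  also have "\<dots> = a - k*u" using h by (rule mod_pos_pos_trivial)
  finally show ?thesis .
qed

lemma mod_triv: "0 \<le> (a::int) \<Longrightarrow> a < u \<Longrightarrow> a mod u = a"
  by simp

context
  fixes u K v :: int
  assumes K0: "0 \<le> K" and uK: "4*K+1 \<le> u" and u2: "2 \<le> u"
    and vu: "v = u \<or> (v = u + 1 \<and> u = 4*K+3)"
begin

lemma trip:
  assumes x0: "0 \<le> x" and xy: "x < y" and yv: "y < v" and z: "z = fv u K v x y"
  shows "(0 \<le> z \<and> z < u \<and> y < u \<and> 1 \<le> (x - z) mod u \<and> 1 \<le> (y - z) mod u \<and>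
           (x - z) mod u + (y - z) mod u = 2*K+1)
       \<or> (y = u \<and> v = u + 1 \<and> z = (x + u div 2) mod u)
       \<or> (y < u \<and> (\<exists>c\<in>CC u K. z = v + c \<and> ((y - x) mod u = c \<or> (x - y) mod u = c)))"
proof -
  have upos: "0 < u" using u2 by simp
  consider (inf) "y = u"
    | (b2) "y \<noteq> u" "odd (y - x) \<and> y - x \<le> 2*K - 1"
    | (b3) "y \<noteq> u" "\<not> (odd (y - x) \<and> y - x \<le> 2*K - 1)" "odd (u - (y - x)) \<and> u - (y - x) \<le> 2*K - 1"
    | (b4) "y \<noteq> u" "\<not> (odd (y - x) \<and> y - x \<le> 2*K - 1)" "\<not> (odd (u - (y - x)) \<and> u - (y - x) \<le> 2*K - 1)"
    by blast
  then show ?thesis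
  proof cases
    case inf
    then have "v = u + 1" using vu yv by auto
    moreover have "z = (x + u div 2) mod u" using inf z unfolding fv_def by simp
    ultimately show ?thesis using inf by (intro disjI2 disjI1) simp
  next
    case b2
    have yu: "y < u" using b2 yv vu by auto
    define d where "d = y - x"
    define i where "i = (2*K + 1 - d) div 2"
    have odd: "odd d" using b2 d_def by simp
    have i2: "2*i = 2*K + 1 - d" unfolding i_def using odd by auto
    have d1: "1 \<le> d" "d \<le> 2*K - 1" using xy b2 d_def by auto
    have zz: "z = (x - i) mod u" unfolding z fv_def d_def i_def
      by (simp only: if_not_P[OF b2(1)] if_P[OF b2(2)[unfolded d_def]])
    have z0: "0 \<le> z" "z < u" using zz upos by auto
    have a: "(x - z) mod u = i" using zz modA[of x "x - i" u] i2 d1 uK by simp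
    have b: "(y - z) mod u = d + i" using zz modA[of y "x - i" u] i2 d1 uK d_def by simp
    show ?thesis using a b z0 yu i2 d1 by (intro disjI1) simp
  next
    case b3
    have yu: "y < u" using b3 yv vu by auto
    define d where "d = u - (y - x)"
    define i where "i = (2*K + 1 - d) div 2"
    have odd: "odd d" using b3 d_def by simp
    have i2: "2*i = 2*K + 1 - d" unfolding i_def using odd by auto
    have d1: "1 \<le> d" "d \<le> 2*K - 1" using xy b3 d_def yu x0 by auto
    have zz: "z = (y - i) mod u" unfolding z fv_def d_def i_def
      by (simp only: if_not_P[OF b3(1)] if_not_P[OF b3(2)] if_P[OF b3(3)])
    have z0: "0 \<le> z" "z < u" using zz upos by auto
    have b: "(y - z) mod u = i" using zz modA[of y "y - i" u] i2 d1 uK by simp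
    have e1: "x - (y - i) = (i + d) - u" using d_def by simp
    have "(x - z) mod u = (x - (y - i)) mod u" using zz modA[of x "y - i" u] by simp
    also have "\<dots> = ((i + d) - u) mod u" by (simp only: e1)
    also have "\<dots> = (i + d) mod u" by simp
    also have "\<dots> = i + d" using i2 d1 uK by simp
    finally have a: "(x - z) mod u = i + d" .
    show ?thesis using a b z0 yu i2 d1 by (intro disjI1) simp
  next
    case b4
    have yu: "y < u" using b4 yv vu by auto
    define c where "c = min (y - x) (u - (y - x))"
    have zz: "z = v + c" unfolding z fv_def c_def
      by (simp only: if_not_P[OF b4(1)] if_not_P[OF b4(2)] if_not_P[OF b4(3)])
    have c1a: "1 \<le> c" using xy yu x0 unfolding c_def by simp
    have c2c: "2*c \<le> u" unfolding c_def by (simp add: min_def)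
    have "(2*c) div 2 \<le> u div 2" using c2c by (intro zdiv_mono1) auto
    then have c1b: "c \<le> u div 2" by simp
    note c1 = c1a c1b
    have c2: "\<not> (odd c \<and> c \<le> 2*K - 1)" using b4 unfolding c_def by (auto simp: min_def)
    have cC: "c \<in> CC u K" using CC_mem c1 c2 by blast
    have e1: "(y - x) mod u = y - x" using xy yu x0 by simp
    have e2: "(x - y) mod u = u - (y - x)" using modk[of "x - y" "-1" u] xy yu x0 by simp
    have "(y - x) mod u = c \<or> (x - y) mod u = c" unfolding e1 e2 c_def min_def by simp
    then show ?thesis using yu zz cC by (intro disjI2) blast
  qed
qed

end



definition phi0 :: "int \<Rightarrow> int \<Rightarrow> int \<Rightarrow> int set \<Rightarrow> int" where
  "phi0 u K v A = fv u K v (Min A) (Max A)"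

definition Y0 :: "int \<Rightarrow> int \<Rightarrow> int \<Rightarrow> int set" where
  "Y0 u K v = {0..<v} \<union> (\<lambda>c. v + c) ` CC u K"

lemma le2: "S \<subseteq> {a, b} \<Longrightarrow> card S \<le> 2"
proof -
  assume "S \<subseteq> {a,b}"
  then have "card S \<le> card {a,b}" by (intro card_mono) auto
  also have "\<dots> \<le> 2" by (simp add: card_insert_if)
  finally show ?thesis .
qed

lemma mod_2u: "0 \<le> (a::int) \<Longrightarrow> a < 2*u \<Longrightarrow> a mod u = (if a < u then a else a - u)"
  using modk[of a 1 u] by (cases "a < u") auto

lemma recon1: "0 \<le> (w::int) \<Longrightarrow> w < u \<Longrightarrow> w = (p + (w - p) mod u) mod u"
  by (simp add: mod_add_right_eq)

lemma recon2: "0 \<le> (w::int) \<Longrightarrow> w < u \<Longrightarrow> w = (p - (p - w) mod u) mod u"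
  by (simp add: mod_diff_right_eq)

lemma mod_neg_diff: "0 \<le> (p::int) \<Longrightarrow> p < q \<Longrightarrow> q < u \<Longrightarrow> (p - q) mod u = u - (q - p)"
  using modk[of "p - q" "-1" u] by simp

lemma pair_int:
  assumes "A \<in> pairs {0..<v}"
  shows "\<exists>x y. A = {x,y} \<and> 0 \<le> x \<and> x < y \<and> y < v \<and> phi0 u K v A = fv u K v x y"
proof -
  obtain a b where ab: "A = {a,b}" "a \<noteq> b" "a \<in> {0..<v}" "b \<in> {0..<v}" using pair_elim[OF assms] .
  show ?thesis
  proof (cases "a < b")
    case True
    then show ?thesis using ab unfolding phi0_def by (intro exI[of _ a] exI[of _ b]) auto
  next
    case False
    then have "b < a" using ab by auto
    then show ?thesis using ab unfolding phi0_def by (intro exI[of _ b] exI[of _ a]) (auto simp: insert_commute)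
  qed
qed

context
  fixes u K v :: int
  assumes K0: "0 \<le> K" and uK: "4*K+1 \<le> u" and u2: "2 \<le> u"
    and vu: "v = u \<or> (v = u + 1 \<and> u = 4*K+3)"
begin

abbreviation "S p q \<equiv> {A\<in>pairs {0..<v}. p \<in> insert (phi0 u K v A) A \<and> q \<in> insert (phi0 u K v A) A}"

lemma getA:
  assumes "A \<in> S p q"
  obtains x y z where "A = {x,y}" "0 \<le> x" "x < y" "y < v" "z = fv u K v x y" "p \<in> {x,y,z}" "q \<in> {x,y,z}"
    "(0 \<le> z \<and> z < u \<and> y < u \<and> 1 \<le> (x - z) mod u \<and> 1 \<le> (y - z) mod u \<and>
           (x - z) mod u + (y - z) mod u = 2*K+1)
       \<or> (y = u \<and> v = u + 1 \<and> z = (x + u div 2) mod u)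
       \<or> (y < u \<and> (\<exists>c\<in>CC u K. z = v + c \<and> ((y - x) mod u = c \<or> (x - y) mod u = c)))"
proof -
  have A: "A \<in> pairs {0..<v}" using assms by simp
  obtain x y where xy: "A = {x,y}" "0 \<le> x" "x < y" "y < v" "phi0 u K v A = fv u K v x y"
    using pair_int[OF A, of u K] by blast
  have "p \<in> {x,y,fv u K v x y}" "q \<in> {x,y,fv u K v x y}" using assms xy by auto
  then show ?thesis using that[OF xy(1-4) refl] trip[OF K0 uK u2 vu xy(2-4) refl] by blast
qed

lemma case1:
  assumes p0: "0 \<le> p" and pq: "p < q" and qu: "q < u"
  shows "card (S p q) \<le> 2"
proof -
  define n where "n = u div 2"
  define Q1 where "Q1 = {q, (p + (2*K + 1 - (q - p))) mod u}"
  define Q2 where "Q2 = {p, (q + (2*K + 1 - (u - (q - p)))) mod u}"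
  define R where "R = (if q - p \<le> 2*K then Q1 else if u - (q - p) \<le> 2*K then Q2
                       else if q - p = n then {p, u} else {q, u})"
  have dqp: "(q - p) mod u = q - p" using pq qu p0 by simp
  have dpq: "(p - q) mod u = u - (q - p)" using mod_neg_diff[OF p0 pq qu] .
  have "S p q \<subseteq> {{p,q}, R}"
  proof
    fix A assume AS: "A \<in> S p q"
    obtain x y z where A: "A = {x,y}" "0 \<le> x" "x < y" "y < v" "z = fv u K v x y"
      "p \<in> {x,y,z}" "q \<in> {x,y,z}" and tr:
      "(0 \<le> z \<and> z < u \<and> y < u \<and> 1 \<le> (x - z) mod u \<and> 1 \<le> (y - z) mod u \<and>
           (x - z) mod u + (y - z) mod u = 2*K+1)
       \<or> (y = u \<and> v = u + 1 \<and> z = (x + u div 2) mod u)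
       \<or> (y < u \<and> (\<exists>c\<in>CC u K. z = v + c \<and> ((y - x) mod u = c \<or> (x - y) mod u = c)))"
      using getA[OF AS] by blast
    consider (T0) "0 \<le> z \<and> z < u \<and> y < u \<and> 1 \<le> (x - z) mod u \<and> 1 \<le> (y - z) mod u \<and>
           (x - z) mod u + (y - z) mod u = 2*K+1"
      | (Inf) "y = u \<and> v = u + 1 \<and> z = (x + u div 2) mod u"
      | (New) "y < u \<and> (\<exists>c\<in>CC u K. z = v + c \<and> ((y - x) mod u = c \<or> (x - y) mod u = c))"
      using tr by blast
    then show "A \<in> {{p,q}, R}"
    proof cases
      case T0
      have ab: "(x - z) mod u \<le> 2*K" "(y - z) mod u \<le> 2*K" using T0 by auto
      consider (nz) "p \<noteq> z" "q \<noteq> z" | (zp) "z = p" | (zq) "z = q" by blast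
      then show ?thesis
      proof cases
        case nz
        then have "A = {p,q}" using A pq by auto
        then show ?thesis by simp
      next
        case zp
        then have qz: "q \<noteq> z" using pq by auto
        have "q = x \<or> q = y" using A qz by auto
        then show ?thesis
        proof
          assume qx: "q = x"
          have le: "q - p \<le> 2*K" using ab qx zp dqp by simp
          have "y = (p + (y - p) mod u) mod u" using recon1[of y u p] A T0 by simp
          also have "(y - p) mod u = 2*K + 1 - (q - p)" using T0 qx zp dqp by simp
          finally have "A = Q1" unfolding Q1_def using A qx by simp
          then show ?thesis unfolding R_def using le by simp
        next
          assume qy: "q = y"
          have le: "q - p \<le> 2*K" using ab qy zp dqp by simp
          have "x = (p + (x - p) mod u) mod u" using recon1[of x u p] A T0 by simp
          also have "(x - p) mod u = 2*K + 1 - (q - p)" using T0 qy zp dqp by simp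
          finally have "A = Q1" unfolding Q1_def using A qy by auto
          then show ?thesis unfolding R_def using le by simp
        qed
      next
        case zq
        then have pz: "p \<noteq> z" using pq by auto
        have "p = x \<or> p = y" using A pz by auto
        then show ?thesis
        proof
          assume px: "p = x"
          have le: "u - (q - p) \<le> 2*K" using ab px zq dpq by simp
          have nle: "\<not> q - p \<le> 2*K" using le uK by simp
          have "y = (q + (y - q) mod u) mod u" using recon1[of y u q] A T0 by simp
          also have "(y - q) mod u = 2*K + 1 - (u - (q - p))" using T0 px zq dpq by simp
          finally have "A = Q2" unfolding Q2_def using A px by simp
          then show ?thesis unfolding R_def using le nle by simp
        next
          assume py: "p = y"
          have le: "u - (q - p) \<le> 2*K" using ab py zq dpq by simp
          have nle: "\<not> q - p \<le> 2*K" using le uK by simp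
          have "x = (q + (x - q) mod u) mod u" using recon1[of x u q] A T0 by simp
          also have "(x - q) mod u = 2*K + 1 - (u - (q - p))" using T0 py zq dpq by simp
          finally have "A = Q2" unfolding Q2_def using A py by auto
          then show ?thesis unfolding R_def using le nle by simp
        qed
      qed
    next
      case Inf
      have u3: "u = 4*K+3" using Inf vu by auto
      have nn: "n = 2*K+1" unfolding n_def using u3 by simp
      have zz: "z = (x + n) mod u" using Inf n_def by simp
      have pqxz: "p \<in> {x, z}" "q \<in> {x, z}" using A Inf pq qu by auto
      have xz: "(x + n) mod u = (if x + n < u then x + n else x + n - u)"
        using mod_2u[of "x + n" u] A Inf nn u3 by simp
      consider (a) "p = x" "q = z" | (b) "p = z" "q = x" using pqxz pq by auto
      then show ?thesis
      proof cases
        case a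
        then have "q - p = n" using zz xz pq nn u3 K0 by (auto split: if_splits)
        then have "R = {p,u}" unfolding R_def using nn u3 by simp
        then show ?thesis using A a Inf by simp
      next
        case b
        then have "q - p = u - n" using zz xz pq nn u3 K0 by (auto split: if_splits)
        then have "R = {q,u}" unfolding R_def using nn u3 by simp
        then show ?thesis using A b Inf by simp
      qed
    next
      case New
      then obtain c where c: "c \<in> CC u K" "z = v + c" by blast
      have "1 \<le> c" using CC_bounds[OF c(1) K0 uK] by simp
      then have "p \<noteq> z" "q \<noteq> z" using c vu qu pq by auto
      then have "A = {p,q}" using A pq by auto
      then show ?thesis by simp
    qed
  qed
  then show ?thesis by (rule le2)
qed

end



context
  fixes u K v :: int
  assumes K0: "0 \<le> K" and uK: "4*K+1 \<le> u" and u2: "2 \<le> u"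
    and vu: "v = u \<or> (v = u + 1 \<and> u = 4*K+3)"
begin

lemma inf_pt:
  assumes xy: "x < y" "y < v" and uin: "u \<in> {x,y,z}" and tr:
      "(0 \<le> z \<and> z < u \<and> y < u \<and> 1 \<le> (x - z) mod u \<and> 1 \<le> (y - z) mod u \<and>
           (x - z) mod u + (y - z) mod u = 2*K+1)
       \<or> (y = u \<and> v = u + 1 \<and> z = (x + u div 2) mod u)
       \<or> (y < u \<and> (\<exists>c\<in>CC u K. z = v + c \<and> ((y - x) mod u = c \<or> (x - y) mod u = c)))"
  shows "y = u \<and> v = u + 1 \<and> z = (x + u div 2) mod u"
proof -
  have upos: "0 < u" using u2 by simp
  have zu: "z \<noteq> u"
  proof
    assume zu: "z = u"
    show False using tr
    proof (elim disjE)
      assume "0 \<le> z \<and> z < u \<and> y < u \<and> 1 \<le> (x - z) mod u \<and> 1 \<le> (y - z) mod u \<and>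
           (x - z) mod u + (y - z) mod u = 2*K+1"
      then show False using zu by simp
    next
      assume "y = u \<and> v = u + 1 \<and> z = (x + u div 2) mod u"
      then have "z < u" using upos by simp
      then show False using zu by simp
    next
      assume "y < u \<and> (\<exists>c\<in>CC u K. z = v + c \<and> ((y - x) mod u = c \<or> (x - y) mod u = c))"
      then obtain c where "c \<in> CC u K" "z = v + c" by blast
      then have "1 \<le> c" "z = v + c" using CC_bounds[of c u K] K0 uK by auto
      then show False using zu vu by auto
    qed
  qed
  then have "u = x \<or> u = y" using uin by blast
  then have yu: "y = u" using xy vu by auto
  then show ?thesis using tr by auto
qed

lemma case2:
  assumes p0: "0 \<le> p" and pu: "p < u" and v1: "v = u + 1"
  shows "card (S u K v p u) \<le> 2"
proof -
  have upos: "0 < u" using u2 by simp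
  have "S u K v p u \<subseteq> {{p,u}, {(p - u div 2) mod u, u}}"
  proof
    fix A assume AS: "A \<in> S u K v p u"
    obtain x y z where A: "A = {x,y}" "0 \<le> x" "x < y" "y < v" "z = fv u K v x y"
      "p \<in> {x,y,z}" "u \<in> {x,y,z}" and tr:
      "(0 \<le> z \<and> z < u \<and> y < u \<and> 1 \<le> (x - z) mod u \<and> 1 \<le> (y - z) mod u \<and>
           (x - z) mod u + (y - z) mod u = 2*K+1)
       \<or> (y = u \<and> v = u + 1 \<and> z = (x + u div 2) mod u)
       \<or> (y < u \<and> (\<exists>c\<in>CC u K. z = v + c \<and> ((y - x) mod u = c \<or> (x - y) mod u = c)))"
      using getA[OF K0 uK u2 vu AS] by blast
    have I: "y = u" "z = (x + u div 2) mod u" using inf_pt[OF A(3,4) A(7) tr] by auto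
    have "p = x \<or> p = z" using A(6) I pu by auto
    then show "A \<in> {{p,u}, {(p - u div 2) mod u, u}}"
    proof
      assume "p = x" then show ?thesis using A I by simp
    next
      assume pz: "p = z"
      have "(p - u div 2) mod u = ((x + u div 2) mod u - u div 2) mod u" using pz I by simp
      also have "\<dots> = x mod u" by (simp add: mod_diff_left_eq)
      also have "\<dots> = x" using A I by simp
      finally show ?thesis using A I by simp
    qed
  qed
  then show ?thesis by (rule le2)
qed

lemma case3:
  assumes p0: "0 \<le> p" and pu: "p < u" and cC: "c \<in> CC u K"
  shows "card (S u K v p (v + c)) \<le> 2"
proof -
  have upos: "0 < u" using u2 by simp
  have c1: "1 \<le> c" using CC_bounds[OF cC K0 uK] by simp
  have "S u K v p (v + c) \<subseteq> {{p, (p + c) mod u}, {p, (p - c) mod u}}"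
  proof
    fix A assume AS: "A \<in> S u K v p (v + c)"
    obtain x y z where A: "A = {x,y}" "0 \<le> x" "x < y" "y < v" "z = fv u K v x y"
      "p \<in> {x,y,z}" "v + c \<in> {x,y,z}" and tr:
      "(0 \<le> z \<and> z < u \<and> y < u \<and> 1 \<le> (x - z) mod u \<and> 1 \<le> (y - z) mod u \<and>
           (x - z) mod u + (y - z) mod u = 2*K+1)
       \<or> (y = u \<and> v = u + 1 \<and> z = (x + u div 2) mod u)
       \<or> (y < u \<and> (\<exists>c\<in>CC u K. z = v + c \<and> ((y - x) mod u = c \<or> (x - y) mod u = c)))"
      using getA[OF K0 uK u2 vu AS] by blast
    have zq: "z = v + c" using A c1 by auto
    have nT0: "\<not> (0 \<le> z \<and> z < u)" using zq c1 vu by auto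
    have nI: "\<not> (z = (x + u div 2) mod u)"
    proof
      assume "z = (x + u div 2) mod u"
      then have "z < u" using upos by simp
      then show False using zq c1 vu by auto
    qed
    have yu: "y < u" and cc: "(y - x) mod u = c \<or> (x - y) mod u = c"
      using tr nT0 nI zq by auto
    have pz: "p \<noteq> z" using zq c1 vu pu by auto
    have "p = x \<or> p = y" using A(6) pz by auto
    then show "A \<in> {{p, (p + c) mod u}, {p, (p - c) mod u}}"
    proof
      assume px: "p = x"
      have r1: "y = (p + (y - p) mod u) mod u" using recon1[of y u p] A yu by simp
      have r2: "y = (p - (p - y) mod u) mod u" using recon2[of y u p] A yu by simp
      show ?thesis using cc
      proof
        assume "(y - x) mod u = c"
        then have "y = (p + c) mod u" using r1 px by simp
        then show ?thesis using A px by simp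
      next
        assume "(x - y) mod u = c"
        then have "y = (p - c) mod u" using r2 px by simp
        then show ?thesis using A px by simp
      qed
    next
      assume py: "p = y"
      have r1: "x = (p + (x - p) mod u) mod u" using recon1[of x u p] A yu by simp
      have r2: "x = (p - (p - x) mod u) mod u" using recon2[of x u p] A yu by simp
      show ?thesis using cc
      proof
        assume "(x - y) mod u = c"
        then have "x = (p + c) mod u" using r1 py by simp
        then show ?thesis using A py by (simp add: insert_commute)
      next
        assume "(y - x) mod u = c"
        then have "x = (p - c) mod u" using r2 py by simp
        then show ?thesis using A py by (simp add: insert_commute)
      qed
    qed
  qed
  then show ?thesis by (rule le2)
qed

lemma case4:
  assumes v1: "v = u + 1" and cC: "c \<in> CC u K"
  shows "card (S u K v u (v + c)) \<le> 2"
proof -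
  have upos: "0 < u" using u2 by simp
  have c1: "1 \<le> c" using CC_bounds[OF cC K0 uK] by simp
  have e: "S u K v u (v + c) = {}"
  proof (rule ccontr)
    assume "S u K v u (v + c) \<noteq> {}"
    then obtain A where AS: "A \<in> S u K v u (v + c)" by blast
    obtain x y z where A: "A = {x,y}" "0 \<le> x" "x < y" "y < v" "z = fv u K v x y"
      "u \<in> {x,y,z}" "v + c \<in> {x,y,z}" and tr:
      "(0 \<le> z \<and> z < u \<and> y < u \<and> 1 \<le> (x - z) mod u \<and> 1 \<le> (y - z) mod u \<and>
           (x - z) mod u + (y - z) mod u = 2*K+1)
       \<or> (y = u \<and> v = u + 1 \<and> z = (x + u div 2) mod u)
       \<or> (y < u \<and> (\<exists>c\<in>CC u K. z = v + c \<and> ((y - x) mod u = c \<or> (x - y) mod u = c)))"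
      using getA[OF K0 uK u2 vu AS] by blast
    have I: "y = u" "z = (x + u div 2) mod u" using inf_pt[OF A(3,4) A(6) tr] by auto
    have zu: "z < u" using I upos by simp
    have "v + c \<in> {x,y,z}" by (rule A(7))
    moreover have "x < v + c" "y < v + c" "z < v + c" using A(3,4) zu c1 v1 by auto
    ultimately show False by auto
  qed
  show ?thesis unfolding e by simp
qed

lemma case5:
  assumes vp: "v \<le> p" and pq: "p < q"
  shows "card (S u K v p q) \<le> 2"
proof -
  have e: "S u K v p q = {}"
  proof (rule ccontr)
    assume "S u K v p q \<noteq> {}"
    then obtain A where AS: "A \<in> S u K v p q" by blast
    obtain x y z where A: "A = {x,y}" "0 \<le> x" "x < y" "y < v" "z = fv u K v x y"
      "p \<in> {x,y,z}" "q \<in> {x,y,z}" and tr: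
      "(0 \<le> z \<and> z < u \<and> y < u \<and> 1 \<le> (x - z) mod u \<and> 1 \<le> (y - z) mod u \<and>
           (x - z) mod u + (y - z) mod u = 2*K+1)
       \<or> (y = u \<and> v = u + 1 \<and> z = (x + u div 2) mod u)
       \<or> (y < u \<and> (\<exists>c\<in>CC u K. z = v + c \<and> ((y - x) mod u = c \<or> (x - y) mod u = c)))"
      using getA[OF K0 uK u2 vu AS] by blast
    have "x < p" "y < p" using A(3,4) vp by auto
    then have "p = z" using A(6) by auto
    have "x < q" "y < q" using A(3,4) vp pq by auto
    then have "q = z" using A(7) by auto
    then show False using \<open>p = z\<close> pq by simp
  qed
  show ?thesis unfolding e by simp
qed

lemma Y0_cases:
  assumes "p \<in> Y0 u K v"
  shows "(0 \<le> p \<and> p < v) \<or> (\<exists>c\<in>CC u K. p = v + c)"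
  using assms unfolding Y0_def by auto

lemma count_lt:
  assumes p: "p \<in> Y0 u K v" and q: "q \<in> Y0 u K v" and pq: "p < q"
  shows "card (S u K v p q) \<le> 2"
proof -
  consider (a) "0 \<le> q" "q < v" | (b) c where "c \<in> CC u K" "q = v + c" using Y0_cases[OF q] by blast
  then show ?thesis
  proof cases
    case a
    then have p0: "0 \<le> p" using Y0_cases[OF p] pq CC_bounds[of _ u K] K0 uK by force
    show ?thesis
    proof (cases "q < u")
      case True then show ?thesis using case1[OF K0 uK u2 vu p0 pq] by simp
    next
      case False
      then have "q = u" "v = u + 1" using a vu by auto
      then show ?thesis using case2[of p] p0 pq by simp
    qed
  next
    case b
    consider (b1) "0 \<le> p" "p < v" | (b2) c' where "c' \<in> CC u K" "p = v + c'" using Y0_cases[OF p] by blast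
    then show ?thesis
    proof cases
      case b1
      show ?thesis
      proof (cases "p < u")
        case True then show ?thesis using case3[OF b1(1) True b(1)] b by simp
      next
        case False
        then have "p = u" "v = u + 1" using b1 vu by auto
        then show ?thesis using case4[OF _ b(1)] b by simp
      qed
    next
      case b2
      have "v \<le> p" using b2 CC_bounds[of c' u K] K0 uK by auto
      then show ?thesis using case5 pq by simp
    qed
  qed
qed

lemma phi_ok:
  assumes A: "A \<in> pairs {0..<v}"
  shows "phi0 u K v A \<in> Y0 u K v \<and> phi0 u K v A \<notin> A"
proof -
  have upos: "0 < u" using u2 by simp
  obtain x y where xy: "A = {x,y}" "0 \<le> x" "x < y" "y < v" "phi0 u K v A = fv u K v x y"
    using pair_int[OF A, of u K] by blast
  define z where "z = fv u K v x y"
  have tr: "(0 \<le> z \<and> z < u \<and> y < u \<and> 1 \<le> (x - z) mod u \<and> 1 \<le> (y - z) mod u \<and>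
           (x - z) mod u + (y - z) mod u = 2*K+1)
       \<or> (y = u \<and> v = u + 1 \<and> z = (x + u div 2) mod u)
       \<or> (y < u \<and> (\<exists>c\<in>CC u K. z = v + c \<and> ((y - x) mod u = c \<or> (x - y) mod u = c)))"
    using trip[OF K0 uK u2 vu xy(2-4) z_def] .
  have "z \<in> Y0 u K v \<and> z \<notin> {x,y}"
    using tr
  proof (elim disjE)
    assume H: "0 \<le> z \<and> z < u \<and> y < u \<and> 1 \<le> (x - z) mod u \<and> 1 \<le> (y - z) mod u \<and>
           (x - z) mod u + (y - z) mod u = 2*K+1"
    have "z \<noteq> x" using H by auto
    moreover have "z \<noteq> y" using H by auto
    moreover have "z \<in> Y0 u K v" using H vu unfolding Y0_def by auto
    ultimately show ?thesis by simp
  next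
    assume H: "y = u \<and> v = u + 1 \<and> z = (x + u div 2) mod u"
    have n1: "1 \<le> u div 2" "u div 2 < u" using u2 by auto
    have zr: "0 \<le> z" "z < u" using H upos by auto
    have m: "(x + u div 2) mod u = (if x + u div 2 < u then x + u div 2 else x + u div 2 - u)"
      using mod_2u[of "x + u div 2" u] xy H n1 by simp
    have "z \<noteq> x" using H m n1 by (auto split: if_splits)
    moreover have "z \<noteq> y" using H zr by auto
    moreover have "z \<in> Y0 u K v" using zr H unfolding Y0_def by auto
    ultimately show ?thesis by simp
  next
    assume H: "y < u \<and> (\<exists>c\<in>CC u K. z = v + c \<and> ((y - x) mod u = c \<or> (x - y) mod u = c))"
    then obtain c where c: "c \<in> CC u K" "z = v + c" by blast
    have "1 \<le> c" using CC_bounds[OF c(1) K0 uK] by simp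
    then show ?thesis using c xy unfolding Y0_def by auto
  qed
  then show ?thesis using xy z_def by simp
qed

lemma WN0: "WN {0..<v} (Y0 u K v) (phi0 u K v)"
proof -
  have fC: "finite (CC u K)" unfolding CC_def by simp
  have f: "finite (Y0 u K v)" unfolding Y0_def using fC by simp
  have sub: "{0..<v} \<subseteq> Y0 u K v" unfolding Y0_def by auto
  have cnt: "\<forall>x\<in>Y0 u K v. \<forall>y\<in>Y0 u K v. x \<noteq> y \<longrightarrow> card (S u K v x y) \<le> 2"
  proof (intro ballI impI)
    fix x y assume x: "x \<in> Y0 u K v" and y: "y \<in> Y0 u K v" and xy: "x \<noteq> y"
    show "card (S u K v x y) \<le> 2"
    proof (cases "x < y")
      case True then show ?thesis using count_lt[OF x y] by simp
    next
      case False
      then have "y < x" using xy by simp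
      then have "card (S u K v y x) \<le> 2" using count_lt[OF y x] by simp
      moreover have "S u K v y x = S u K v x y" by blast
      ultimately show ?thesis by simp
    qed
  qed
  show ?thesis unfolding WN_def using f sub cnt phi_ok by blast
qed

lemma card_Y0: "int (card (Y0 u K v)) = v + u div 2 - K"
proof -
  have d1: "(\<lambda>j. 2*j) ` {1..K} \<inter> {2*K+1..u div 2} = {}" by auto
  have "card (CC u K) = card ((\<lambda>j. 2*j) ` {1..K}) + card {2*K+1..u div 2}"
    unfolding CC_def using d1 by (intro card_Un_disjoint) auto
  also have "card ((\<lambda>j. 2*j) ` {1..K}) = card {1..K}" by (intro card_image) (auto simp: inj_on_def)
  finally have cC: "card (CC u K) = nat K + nat (u div 2 - 2*K)" by simp
  have d2: "{0..<v} \<inter> (\<lambda>c. v + c) ` CC u K = {}" using CC_bounds[of _ u K] K0 uK by force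
  have fC: "finite (CC u K)" unfolding CC_def by simp
  have "card (Y0 u K v) = card {0..<v} + card ((\<lambda>c. v + c) ` CC u K)"
    unfolding Y0_def using d2 fC by (intro card_Un_disjoint) auto
  also have "card ((\<lambda>c. v + c) ` CC u K) = card (CC u K)" by (intro card_image) (auto simp: inj_on_def)
  finally have "card (Y0 u K v) = nat v + nat K + nat (u div 2 - 2*K)" using cC by simp
  moreover have "u div 2 - 2*K \<ge> 0" using uK by linarith
  moreover have "v \<ge> 0" using vu u2 by auto
  ultimately show ?thesis using K0 by simp
qed

end



lemma pairs_image:
  assumes g: "inj g"
  shows "pairs (g ` X) = (\<lambda>A. g ` A) ` pairs X"
proof (rule set_eqI, rule iffI)
  fix B assume B: "B \<in> pairs (g ` X)"
  then have Bs: "B \<subseteq> g ` X" "card B = 2" unfolding pairs_def by auto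
  define A where "A = g -` B"
  have gA: "g ` A = B" unfolding A_def using Bs by auto
  have AX: "A \<subseteq> X" unfolding A_def using Bs g by (auto simp: inj_eq)
  have "card A = card B" using gA card_image[of g A] g by (metis inj_on_subset subset_UNIV)
  then have "A \<in> pairs X" using AX Bs unfolding pairs_def by simp
  then show "B \<in> (\<lambda>A. g ` A) ` pairs X" using gA by blast
next
  fix B assume "B \<in> (\<lambda>A. g ` A) ` pairs X"
  then obtain A where A: "A \<in> pairs X" "B = g ` A" by blast
  have "card (g ` A) = card A" using card_image[of g A] g by (metis inj_on_subset subset_UNIV)
  then show "B \<in> pairs (g ` X)" using A unfolding pairs_def by auto
qed

lemma WN_transfer:
  assumes g: "inj g" and W: "WN X Y \<phi>"
  shows "WN (g ` X) (g ` Y) (\<lambda>B. g (\<phi> (g -` B)))"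
proof -
  define \<psi> where "\<psi> = (\<lambda>B. g (\<phi> (g -` B)))"
  have ps: "\<And>A. \<psi> (g ` A) = g (\<phi> A)" unfolding \<psi>_def using inj_vimage_image_eq[OF g] by simp
  have PI: "pairs (g ` X) = (\<lambda>A. g ` A) ` pairs X" by (rule pairs_image[OF g])
  have fY: "finite Y" "X \<subseteq> Y" using WN_D[OF W] by auto
  have c1: "\<forall>B\<in>pairs (g ` X). \<psi> B \<in> g ` Y \<and> \<psi> B \<notin> B"
  proof
    fix B assume "B \<in> pairs (g ` X)"
    then obtain A where A: "A \<in> pairs X" "B = g ` A" using PI by blast
    have "\<phi> A \<in> Y" "\<phi> A \<notin> A" using WN_D(3,4)[OF W A(1)] by auto
    then show "\<psi> B \<in> g ` Y \<and> \<psi> B \<notin> B" using A ps g by (auto simp: inj_eq)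
  qed
  have c2: "\<forall>x\<in>g ` Y. \<forall>y\<in>g ` Y. x \<noteq> y \<longrightarrow>
      card {B\<in>pairs (g ` X). x \<in> insert (\<psi> B) B \<and> y \<in> insert (\<psi> B) B} \<le> 2"
  proof (intro ballI impI)
    fix x' y' assume "x' \<in> g ` Y" "y' \<in> g ` Y" "x' \<noteq> y'"
    then obtain x y where xy: "x \<in> Y" "y \<in> Y" "x' = g x" "y' = g y" "x \<noteq> y" by blast
    have eq: "{B\<in>pairs (g ` X). x' \<in> insert (\<psi> B) B \<and> y' \<in> insert (\<psi> B) B}
        = (\<lambda>A. g ` A) ` {A\<in>pairs X. x \<in> insert (\<phi> A) A \<and> y \<in> insert (\<phi> A) A}"
    proof (rule set_eqI, rule iffI)
      fix B assume "B \<in> {B\<in>pairs (g ` X). x' \<in> insert (\<psi> B) B \<and> y' \<in> insert (\<psi> B) B}"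
      then obtain A where A: "A \<in> pairs X" "B = g ` A" "x' \<in> insert (\<psi> B) B" "y' \<in> insert (\<psi> B) B"
        using PI by blast
      then have "x \<in> insert (\<phi> A) A" "y \<in> insert (\<phi> A) A" using ps xy g by (auto simp: inj_eq)
      then show "B \<in> (\<lambda>A. g ` A) ` {A\<in>pairs X. x \<in> insert (\<phi> A) A \<and> y \<in> insert (\<phi> A) A}"
        using A by blast
    next
      fix B assume "B \<in> (\<lambda>A. g ` A) ` {A\<in>pairs X. x \<in> insert (\<phi> A) A \<and> y \<in> insert (\<phi> A) A}"
      then obtain A where A: "A \<in> pairs X" "B = g ` A" "x \<in> insert (\<phi> A) A" "y \<in> insert (\<phi> A) A"
        by blast
      then have "x' \<in> insert (\<psi> B) B" "y' \<in> insert (\<psi> B) B" using ps xy by auto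
      moreover have "B \<in> pairs (g ` X)" using A PI by blast
      ultimately show "B \<in> {B\<in>pairs (g ` X). x' \<in> insert (\<psi> B) B \<and> y' \<in> insert (\<psi> B) B}" by blast
    qed
    have inj2: "inj_on (\<lambda>A. g ` A) S" for S using g by (auto simp: inj_on_def inj_image_eq_iff)
    have "card {B\<in>pairs (g ` X). x' \<in> insert (\<psi> B) B \<and> y' \<in> insert (\<psi> B) B}
        = card {A\<in>pairs X. x \<in> insert (\<phi> A) A \<and> y \<in> insert (\<phi> A) A}"
      unfolding eq by (rule card_image[OF inj2])
    also have "\<dots> \<le> 2" using WN_D(5)[OF W xy(1,2,5)] .
    finally show "card {B\<in>pairs (g ` X). x' \<in> insert (\<psi> B) B \<and> y' \<in> insert (\<psi> B) B} \<le> 2" .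
  qed
  have "WN (g ` X) (g ` Y) \<psi>" unfolding WN_def using fY c1 c2 by blast
  then show ?thesis unfolding \<psi>_def .
qed

lemma embed:
  assumes inf: "infinite (UNIV :: 'a set)" and fX: "finite (X::'a set)" and cX: "card X = v"
  shows "\<exists>g :: int \<Rightarrow> 'a. inj g \<and> g ` {0..<int v} = X"
proof -
  obtain b where b: "bij_betw b {0..<int v} X"
    using finite_same_card_bij[of "{0..<int v}" X] fX cX by auto
  have "infinite (UNIV - X)" using inf fX by (rule Diff_infinite_finite[rotated])
  then obtain h :: "nat \<Rightarrow> 'a" where h: "inj h" "range h \<subseteq> UNIV - X"
    using infinite_countable_subset by blast
  define g where "g = (\<lambda>i. if i \<in> {0..<int v} then b i else h (int_encode i))"
  have "inj g"
  proof (rule injI)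
    fix i j assume e: "g i = g j"
    show "i = j"
    proof (cases "i \<in> {0..<int v}"; cases "j \<in> {0..<int v}")
      assume "i \<in> {0..<int v}" "j \<in> {0..<int v}"
      then show ?thesis using e b unfolding g_def bij_betw_def inj_on_def by auto
    next
      assume "i \<in> {0..<int v}" "j \<notin> {0..<int v}"
      then have "g i \<in> X" "g j \<notin> X" using b h unfolding g_def bij_betw_def by auto
      then show ?thesis using e by simp
    next
      assume "i \<notin> {0..<int v}" "j \<in> {0..<int v}"
      then have "g j \<in> X" "g i \<notin> X" using b h unfolding g_def bij_betw_def by auto
      then show ?thesis using e by simp
    next
      assume "i \<notin> {0..<int v}" "j \<notin> {0..<int v}"
      then have "g i = h (int_encode i)" "g j = h (int_encode j)" unfolding g_def by auto
      then have "h (int_encode i) = h (int_encode j)" using e by simp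
      then show ?thesis using h(1) by (simp add: inj_eq int_encode_eq)
    qed
  qed
  moreover have "g ` {0..<int v} = X" using b unfolding g_def bij_betw_def by auto
  ultimately show ?thesis by blast
qed

lemma ceil_eq: "nat \<lceil>(5 * real v - 1) / 4\<rceil> = v + (v + 2) div 4"
proof -
  define q where "q = (v + 2) div 4"
  have h1: "4 * q \<le> v + 2" "v + 2 \<le> 4 * q + 3" unfolding q_def by auto
  have r1: "4 * real q \<le> real v + 2" "real v + 2 \<le> 4 * real q + 3"
  proof -
    have "real (4 * q) \<le> real (v + 2)" "real (v + 2) \<le> real (4 * q + 3)" using h1 by (simp_all only: of_nat_le_iff)
    then show "4 * real q \<le> real v + 2" "real v + 2 \<le> 4 * real q + 3" by simp_all
  qed
  have "\<lceil>(5 * real v - 1) / 4\<rceil> = int (v + q)"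
  proof (rule ceiling_unique)
    show "real_of_int (int (v + q)) - 1 < (5 * real v - 1) / 4" using r1 by simp
    show "(5 * real v - 1) / 4 \<le> real_of_int (int (v + q))" using r1 by simp
  qed
  then show ?thesis unfolding q_def by simp
qed




lemma params:
  assumes h1: "(vi::int) = 4*t + r" and h2: "0 \<le> r" "r < 4" and h4: "2 \<le> vi"
    and h5: "u = (if r = 0 then vi - 1 else vi)" and h6: "K = (u - 1) div 4"
  shows "0 \<le> K \<and> 4*K+1 \<le> u \<and> 2 \<le> u \<and> (vi = u \<or> (vi = u + 1 \<and> u = 4*K+3)) \<and> vi + u div 2 - K = vi + (vi + 2) div 4"
proof -
  have "r = 0 \<or> r = 1 \<or> r = 2 \<or> r = 3" using h2 by auto
  then show ?thesis
  proof (elim disjE)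
    assume r: "r = 0"
    have u: "u = 4*t - 1" using h5 h1 r by simp
    have um: "u - 1 = 4*t - 2" using u by simp
    have K': "K = (4*t - 2) div 4" unfolding h6 um by (rule refl)
    have K: "K = t - 1" unfolding K' by presburger
    have a: "u div 2 = 2*t - 1" unfolding u by presburger
    have b: "(vi + 2) div 4 = t" unfolding h1 r by presburger
    have t1: "1 \<le> t" using h1 h4 r by simp
    show ?thesis unfolding a b using u K t1 h1 r by simp
  next
    assume r: "r = 1"
    have u: "u = 4*t + 1" using h5 h1 r by simp
    have um: "u - 1 = 4*t" using u by simp
    have K': "K = (4*t) div 4" unfolding h6 um by (rule refl)
    have K: "K = t" unfolding K' by presburger
    have a: "u div 2 = 2*t" unfolding u by presburger
    have b: "(vi + 2) div 4 = t" unfolding h1 r by presburger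
    have t1: "1 \<le> t" using h1 h4 r by simp
    show ?thesis unfolding a b using u K t1 h1 r by simp
  next
    assume r: "r = 2"
    have u: "u = 4*t + 2" using h5 h1 r by simp
    have um: "u - 1 = 4*t + 1" using u by simp
    have K': "K = (4*t + 1) div 4" unfolding h6 um by (rule refl)
    have K: "K = t" unfolding K' by presburger
    have a: "u div 2 = 2*t + 1" unfolding u by presburger
    have b: "(vi + 2) div 4 = t + 1" unfolding h1 r by presburger
    have t1: "0 \<le> t" using h1 h4 r by simp
    show ?thesis unfolding a b using u K t1 h1 r by simp
  next
    assume r: "r = 3"
    have u: "u = 4*t + 3" using h5 h1 r by simp
    have um: "u - 1 = 4*t + 2" using u by simp
    have K': "K = (4*t + 2) div 4" unfolding h6 um by (rule refl)
    have K: "K = t" unfolding K' by presburger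
    have a: "u div 2 = 2*t + 1" unfolding u by presburger
    have b: "(vi + 2) div 4 = t + 1" unfolding h1 r by presburger
    have t1: "0 \<le> t" using h1 h4 r by simp
    show ?thesis unfolding a b using u K t1 h1 r by simp
  qed
qed

theorem theorem2p1:
  fixes X :: "'a set" and v :: nat
  assumes "infinite (UNIV :: 'a set)" and "finite X" and "card X = v" and "v \<ge> 2"
  shows "bibd X 2 1 (mset_set (pairs X))
    \<and> (\<exists>Y \<phi>. card Y = nat \<lceil>(5 * real v - 1) / 4\<rceil> \<and> weak_nesting X 2 1 (pairs X) Y \<phi>)
    \<and> (\<forall>Y \<phi>. weak_nesting X 2 1 (pairs X) Y \<phi> \<longrightarrow> nat \<lceil>(5 * real v - 1) / 4\<rceil> \<le> card Y)"
proof -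
  note inf = assms(1) and fX = assms(2) and cX = assms(3) and v2 = assms(4)
  have c1: "bibd X 2 1 (mset_set (pairs X))" by (rule bibd_pairs[OF fX])
  have w: "nat \<lceil>(5 * real v - 1) / 4\<rceil> = v + (v + 2) div 4" by (rule ceil_eq)
  have c2: "\<exists>Y \<phi>. card Y = v + (v + 2) div 4 \<and> weak_nesting X 2 1 (pairs X) Y \<phi>"
  proof -
    define vi where "vi = int v"
    define u where "u = (if vi mod 4 = 0 then vi - 1 else vi)"
    define K where "K = (u - 1) div 4"
    have vi2: "2 \<le> vi" unfolding vi_def using v2 by simp
    have h1: "vi = 4 * (vi div 4) + vi mod 4" by simp
    have P: "0 \<le> K \<and> 4*K+1 \<le> u \<and> 2 \<le> u \<and> (vi = u \<or> (vi = u + 1 \<and> u = 4*K+3)) \<and> vi + u div 2 - K = vi + (vi + 2) div 4"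
      by (rule params[OF h1 _ _ vi2 u_def K_def]) simp_all
    then have K0: "0 \<le> K" and uK: "4*K+1 \<le> u" and u2: "2 \<le> u"
      and vu: "vi = u \<or> (vi = u + 1 \<and> u = 4*K+3)" and eq: "vi + u div 2 - K = vi + (vi + 2) div 4"
      by auto
    have W0: "WN {0..<vi} (Y0 u K vi) (phi0 u K vi)" by (rule WN0[OF K0 uK u2 vu])
    obtain g :: "int \<Rightarrow> 'a" where g: "inj g" "g ` {0..<int v} = X" using embed[OF inf fX cX] by blast
    have W1: "WN X (g ` Y0 u K vi) (\<lambda>B. g (phi0 u K vi (g -` B)))"
      using WN_transfer[OF g(1) W0] g(2) unfolding vi_def by simp
    have cY: "card (g ` Y0 u K vi) = card (Y0 u K vi)" using g(1) by (metis card_image inj_on_subset subset_UNIV)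
    have ci: "int (card (Y0 u K vi)) = vi + u div 2 - K" by (rule card_Y0[OF K0 uK u2 vu])
    have e2: "int (v + (v + 2) div 4) = vi + (vi + 2) div 4" unfolding vi_def by (simp add: zdiv_int)
    have "int (card (Y0 u K vi)) = int (v + (v + 2) div 4)"
      using trans[OF ci eq] e2[symmetric] by (rule trans)
    then have "card (g ` Y0 u K vi) = v + (v + 2) div 4" using cY by simp
    then show ?thesis using W1 WN_iff by blast
  qed
  have c3: "\<forall>Y \<phi>. weak_nesting X 2 1 (pairs X) Y \<phi> \<longrightarrow> v + (v + 2) div 4 \<le> card Y"
  proof (intro allI impI)
    fix Y \<phi> assume "weak_nesting X 2 1 (pairs X) Y \<phi>"
    then have W: "WN X Y \<phi>" using WN_iff by blast
    have lb: "card X - 1 \<le> 4 * card (Y - X)" by (rule lower_bound[OF W fX])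
    have fY: "finite Y" "X \<subseteq> Y" using WN_D[OF W] by auto
    have "card Y = card X + card (Y - X)"
      using fY card_Diff_subset[OF finite_subset[OF fY(2) fY(1)] fY(2)] card_mono[OF fY(1) fY(2)] by simp
    moreover have "(v + 2) div 4 \<le> card (Y - X)"
    proof -
      have "v + 2 \<le> 4 * card (Y - X) + 3" using lb cX by simp
      then show ?thesis by presburger
    qed
    ultimately show "v + (v + 2) div 4 \<le> card Y" using cX by simp
  qed
  show ?thesis using c1 c2 c3 unfolding w by blast
qed


end
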